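(* Let $n,k$ be positive integers such that $s^{n,k}=\frac{n(n+1)}{2k}$ is an integer, let $l<k$, and let $p_1\le p_2\le\cdots\le p_l$ be positive integers (an incomplete ascending partition $P=[p_1,\ldots,p_l]$) satisfying: (i) $n-\sum_{i=1}^l p_i\ge (k-l)p_l$; and (ii) $\mathrm{slack}_j(P)=\sum_{i=1}^{p_1+\cdots+p_j}(n-i+1)-j\,s^{n,k}\ge 0$ for all $j\le l$. Then there exist integers $p_{l+1},\ldots,p_k$ such that $\mathcal P=[p_1,\ldots,p_k]\in AP_{n,k}$ and $\mathrm{slack}(\mathcal P)\ge 0$.
   Context: An ascending partition of $n$ of size $k$ is a sequence of positive integers $[p_1,\ldots,p_k]$ with $p_1\le\cdots\le p_k$ and $\sum_i p_i=n$; $AP_{n,k}$ is the set of all such partitions when $s^{n,k}$ is an integer. For $\mathcal P\in AP_{n,k}$ and $j=1,\ldots,k$, $\mathrm{slack}_j(\mathcal P)=\sum_{i=1}^{p_1+\cdots+p_j}(n-i+1)-j\,s^{n,k}$, and $\mathrm{slack}(\mathcal P)=\min_{1\le j\le k-1}\mathrm{slack}_j(\mathcal P)$. *)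

theory Defs
  imports Main
begin

text \<open>s^{n,k} = n(n+1)/(2k); used only when 2k divides n(n+1).\<close>
definition s_nk :: "nat \<Rightarrow> nat \<Rightarrow> nat" where
  "s_nk n k = n * (n + 1) div (2 * k)"

definition AP :: "nat \<Rightarrow> nat \<Rightarrow> nat list set" where
  "AP n k = {ps. length ps = k \<and> (\<forall>p\<in>set ps. 0 < p) \<and> sorted ps \<and> sum_list ps = n}"

definition slack_j :: "nat \<Rightarrow> nat \<Rightarrow> nat list \<Rightarrow> nat \<Rightarrow> int" where
  "slack_j n k ps j =
     (\<Sum>i = 1..sum_list (take j ps). int n - int i + 1) - int j * int (s_nk n k)"

end

theory Submission
  imports Defs
begin

lemma key:
  fixes a q r t L s n :: int
  assumes "n = a + r*q + t" "2*(L+r)*s = n*(n+1)" "0\<le>t" "t<r" "1\<le>q" "2\<le>r"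
    "a*(2*n-a+1) - 2*L*s \<ge> 0"
  shows "(a+q)*(2*n-(a+q)+1) - 2*(L+1)*s \<ge> 0"
proof -
  have id: "r*((a+q)*(2*n-(a+q)+1) - 2*(L+1)*s) = (r-1)*(a*(2*n-a+1) - 2*L*s) + (r*q^2*(r-1) - t*(t+1))"
  proof -
    have "r*((a+q)*(2*n-(a+q)+1) - 2*(L+1)*s) - ((r-1)*(a*(2*n-a+1) - 2*L*s) + (r*q^2*(r-1) - t*(t+1)))
       = n*(n+1) - 2*(L+r)*s" using assms(1) by (simp add: algebra_simps power2_eq_square)
    then show ?thesis using assms(2) by simp
  qed
  have "t*(t+1) \<le> (r-1)*r" using assms(3,4) by (intro mult_mono) auto
  also have "(r-1)*r \<le> r*q^2*(r-1)"
  proof -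
    have "1 \<le> q^2" using assms(5) by (simp add: one_le_power)
    then show ?thesis using assms(6) by (simp add: mult_left_mono mult.commute)
  qed
  finally have "0 \<le> r*((a+q)*(2*n-(a+q)+1) - 2*(L+1)*s)"
    using id assms(7) assms(6) by simp
  then show ?thesis using assms(6) by (simp add: zero_le_mult_iff)
qed

lemma S_closed: "2 * (\<Sum>i = 1..m. int n - int i + 1) = int m * (2 * int n - int m + 1)"
  by (induction m) (auto simp: algebra_simps)

lemma slack_eq:
  assumes "2 * k * s_nk n k = n * (n + 1)"
  shows "2 * slack_j n k ps j = int (sum_list (take j ps)) * (2 * int n - int (sum_list (take j ps)) + 1)
           - 2 * int j * int (s_nk n k)"
  unfolding slack_j_def using S_closed[where m="sum_list (take j ps)" and n=n] by (simp add: algebra_simps)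

lemma ext:
  assumes sk: "2 * k * s_nk n k = n * (n + 1)"
  shows "\<And>ps m. length ps + Suc r' = k \<Longrightarrow> sorted ps \<Longrightarrow> (\<forall>p\<in>set ps. 0 < p \<and> p \<le> m) \<Longrightarrow> 0 < m
    \<Longrightarrow> sum_list ps + Suc r' * m \<le> n
    \<Longrightarrow> (\<forall>j. 1 \<le> j \<and> j \<le> length ps \<longrightarrow> slack_j n k ps j \<ge> 0)
    \<Longrightarrow> \<exists>qs. length qs = k - length ps \<and> ps @ qs \<in> AP n k \<and>
           (\<forall>j. 1 \<le> j \<and> j \<le> k - 1 \<longrightarrow> slack_j n k (ps @ qs) j \<ge> 0)"
proof (induction r')
  case 0
  let ?R = "n - sum_list ps"
  have len: "length [?R] = k - length ps" using 0 by simp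
  have "m \<le> ?R" using 0 by simp
  hence AP: "ps @ [?R] \<in> AP n k" using 0 unfolding AP_def
    by (auto simp: sorted_append)
  have "\<forall>j. 1 \<le> j \<and> j \<le> k - 1 \<longrightarrow> slack_j n k (ps @ [?R]) j \<ge> 0"
  proof (intro allI impI)
    fix j assume j: "1 \<le> j \<and> j \<le> k - 1"
    have jl: "j \<le> length ps" using 0(1) j by linarith
    hence "take j (ps @ [?R]) = take j ps" by simp
    hence "slack_j n k (ps @ [?R]) j = slack_j n k ps j" unfolding slack_j_def by simp
    then show "slack_j n k (ps @ [?R]) j \<ge> 0" using 0(6) j jl by simp
  qed
  then show ?case using len AP by blast
next
  case (Suc r')
  define r where "r = Suc (Suc r')"
  define R where "R = n - sum_list ps"
  define q where "q = R div r"
  define t where "t = R mod r"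
  have Rq: "R = r * q + t" unfolding q_def t_def by simp
  have tr: "t < r" unfolding t_def r_def by simp
  have rm: "r * m \<le> R" using Suc.prems(5) unfolding R_def r_def by simp
  have mq: "m \<le> q" unfolding q_def using rm r_def
    by (metis div_le_mono nonzero_mult_div_cancel_left zero_neq_numeral Zero_not_Suc)
  have q1: "0 < q" using mq Suc.prems(4) by simp
  let ?ps = "ps @ [q]"
  have p1: "length ?ps + Suc r' = k" using Suc.prems(1) by simp
  have p2: "sorted ?ps" using Suc.prems(2,3) mq by (auto simp: sorted_append)
  have p3: "\<forall>p\<in>set ?ps. 0 < p \<and> p \<le> q" using Suc.prems(3) mq q1 by auto
  have p5: "sum_list ?ps + Suc r' * q \<le> n"
  proof -
    have "sum_list ?ps + Suc r' * q = sum_list ps + r * q" unfolding r_def by simp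
    also have "\<dots> \<le> sum_list ps + R" using Rq by simp
    also have "\<dots> = n" unfolding R_def using Suc.prems(5) by simp
    finally show ?thesis .
  qed
  have p6: "\<forall>j. 1 \<le> j \<and> j \<le> length ?ps \<longrightarrow> slack_j n k ?ps j \<ge> 0"
  proof (intro allI impI)
    fix j assume j: "1 \<le> j \<and> j \<le> length ?ps"
    show "slack_j n k ?ps j \<ge> 0"
    proof (cases "j \<le> length ps")
      case True
      hence "take j ?ps = take j ps" by simp
      hence "slack_j n k ?ps j = slack_j n k ps j" unfolding slack_j_def by simp
      then show ?thesis using Suc.prems(6) j True by simp
    next
      case False
      hence jL: "j = length ps + 1" using j by simp
      define a where "a = sum_list ps"
      define L where "L = length ps"
      have tk: "take j ?ps = ?ps" using jL by simp
      have old: "slack_j n k ps L \<ge> 0 \<or> L = 0" using Suc.prems(6)[rule_format, of "length ps"] unfolding L_def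
        by (cases "length ps = 0") auto
      have oldeq: "2 * slack_j n k ps L = int a * (2 * int n - int a + 1) - 2 * int L * int (s_nk n k)"
        using slack_eq[OF sk, of ps L] unfolding a_def L_def by simp
      have old2: "int a * (2 * int n - int a + 1) - 2 * int L * int (s_nk n k) \<ge> 0"
        using old oldeq unfolding a_def[symmetric] by (auto simp: L_def a_def)
      have neweq: "2 * slack_j n k ?ps j = int (a + q) * (2 * int n - int (a + q) + 1) - 2 * int (L+1) * int (s_nk n k)"
        using slack_eq[OF sk, of ?ps j] tk jL unfolding a_def L_def by simp
      have nA0: "n = a + r * q + t"
        using Rq Suc.prems(5) unfolding R_def a_def by simp
      have nA: "int n = int a + int r * int q + int t"
        using arg_cong[OF nA0, of int] by simp
      have kk: "k = L + r" using Suc.prems(1) unfolding L_def r_def by simp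
      have sk2: "2 * (int L + int r) * int (s_nk n k) = int n * (int n + 1)"
      proof -
        have "int (2 * k * s_nk n k) = int (n * (n + 1))" using sk by simp
        then show ?thesis unfolding kk by (simp add: algebra_simps)
      qed
      have "(int a + int q) * (2 * int n - (int a + int q) + 1) - 2 * (int L + 1) * int (s_nk n k) \<ge> 0"
        by (rule key[OF nA sk2]) (use tr q1 old2 in \<open>auto simp: r_def\<close>)
      then show ?thesis using neweq by (simp add: algebra_simps)
    qed
  qed
  obtain qs where qs: "length qs = k - length ?ps" "?ps @ qs \<in> AP n k"
     "\<forall>j. 1 \<le> j \<and> j \<le> k - 1 \<longrightarrow> slack_j n k (?ps @ qs) j \<ge> 0"
    using Suc.IH[OF p1 p2 p3 q1 p5 p6] by blast
  have "length (q # qs) = k - length ps" using qs(1) Suc.prems(1) by simp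
  then show ?case using qs(2,3) by (intro exI[of _ "q # qs"]) auto
qed

theorem mainTheorem5:
  fixes n k :: nat and ps :: "nat list"
  assumes "0 < n" and "0 < k"
    and "(2 * k) dvd (n * (n + 1))"
    and "0 < length ps" and "length ps < k"
    and "\<forall>p\<in>set ps. 0 < p" and "sorted ps"
    and "int n - int (sum_list ps) \<ge> int (k - length ps) * int (last ps)"
    and "\<forall>j. 1 \<le> j \<and> j \<le> length ps \<longrightarrow> slack_j n k ps j \<ge> 0"
  shows "\<exists>qs. length qs = k - length ps \<and> ps @ qs \<in> AP n k \<and>
           (\<forall>j. 1 \<le> j \<and> j \<le> k - 1 \<longrightarrow> slack_j n k (ps @ qs) j \<ge> 0)"
proof -
  have sk: "2 * k * s_nk n k = n * (n + 1)" unfolding s_nk_def using assms(3) by simp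
  obtain r' where r': "k - length ps = Suc r'" using assms(5) by (metis Suc_diff_Suc)
  have lastin: "last ps \<in> set ps" using assms(4) by simp
  have le: "\<forall>p\<in>set ps. 0 < p \<and> p \<le> last ps"
    using assms(6,7) assms(4) by (auto simp: sorted_iff_nth_mono in_set_conv_nth last_conv_nth)
  have m0: "0 < last ps" using lastin assms(6) by blast
  have "int (sum_list ps + Suc r' * last ps) \<le> int n" using assms(8) r' by (simp add: algebra_simps)
  hence "sum_list ps + Suc r' * last ps \<le> n" by linarith
  then show ?thesis
    using ext[OF sk, of ps r' "last ps"] r' assms(5,7,9) le m0 by simp
qed

end
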